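(* Let $(\Omega,\mathcal{F},\mathbb{P})$ be a probability space and let $X,Y$ be real-valued random variables with $\mathbb{E}[|X|]<\infty$ and $\mathbb{E}[|Y|]<\infty$. For such a random variable $Z$ define the mean absolute deviation $\mathrm{MAD}(Z):=\mathbb{E}\big[|Z-\mathbb{E}[Z]|\big]$. Then $$\mathrm{MAD}(X+Y)=\mathrm{MAD}(X)+\mathrm{MAD}(Y)$$ if and only if $$(X-\mathbb{E}[X])(Y-\mathbb{E}[Y])\geq 0 \quad \mathbb{P}\text{-almost surely}.$$ *)

theory Defs
  imports "HOL-Probability.Probability"
begin

definition MAD :: "'a measure \<Rightarrow> ('a \<Rightarrow> real) \<Rightarrow> real" where
  "MAD M Z = (\<integral>x. \<bar>Z x - (\<integral>y. Z y \<partial>M)\<bar> \<partial>M)"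

end

theory Submission
  imports Defs
begin

theorem theorem1:
  fixes M :: "'a measure" and X Y :: "'a \<Rightarrow> real"
  assumes "prob_space M"
    and "X \<in> borel_measurable M" and "Y \<in> borel_measurable M"
    and "integrable M X" and "integrable M Y"
  shows "MAD M (\<lambda>\<omega>. X \<omega> + Y \<omega>) = MAD M X + MAD M Y \<longleftrightarrow>
         (AE \<omega> in M. (X \<omega> - (\<integral>x. X x \<partial>M)) * (Y \<omega> - (\<integral>y. Y y \<partial>M)) \<ge> 0)"
proof -
  interpret prob_space M by fact
  define a where "a = (\<lambda>\<omega>. X \<omega> - (\<integral>x. X x \<partial>M))"
  define b where "b = (\<lambda>\<omega>. Y \<omega> - (\<integral>y. Y y \<partial>M))"
  have ia: "integrable M a" unfolding a_def using assms by auto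
  have ib: "integrable M b" unfolding b_def using assms by auto
  have e: "(\<integral>x. X x + Y x \<partial>M) = (\<integral>x. X x \<partial>M) + (\<integral>x. Y x \<partial>M)"
    using assms by (simp add: Bochner_Integration.integral_add)
  have m1: "MAD M (\<lambda>\<omega>. X \<omega> + Y \<omega>) = (\<integral>x. \<bar>a x + b x\<bar> \<partial>M)"
    unfolding MAD_def e a_def b_def by (simp add: algebra_simps)
  have m2: "MAD M X = (\<integral>x. \<bar>a x\<bar> \<partial>M)" "MAD M Y = (\<integral>x. \<bar>b x\<bar> \<partial>M)"
    unfolding MAD_def a_def b_def by auto
  define f where "f = (\<lambda>x. \<bar>a x\<bar> + \<bar>b x\<bar> - \<bar>a x + b x\<bar>)"
  have iab: "integrable M (\<lambda>x. a x + b x)" using ia ib by auto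
  have if': "integrable M f" unfolding f_def using ia ib iab by auto
  have intf: "integral\<^sup>L M f = (\<integral>x. \<bar>a x\<bar> \<partial>M) + (\<integral>x. \<bar>b x\<bar> \<partial>M) - (\<integral>x. \<bar>a x + b x\<bar> \<partial>M)"
    unfolding f_def using ia ib iab
    by (simp add: Bochner_Integration.integral_add Bochner_Integration.integral_diff)
  have nn: "AE x in M. 0 \<le> f x" unfolding f_def by (auto simp: abs_triangle_ineq)
  have pt: "\<And>x. f x = 0 \<longleftrightarrow> a x * b x \<ge> 0"
    unfolding f_def by (auto simp: abs_if zero_le_mult_iff mult_le_0_iff)
  have "MAD M (\<lambda>\<omega>. X \<omega> + Y \<omega>) = MAD M X + MAD M Y \<longleftrightarrow> integral\<^sup>L M f = 0"
    using m1 m2 intf by linarith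
  also have "\<dots> \<longleftrightarrow> (AE x in M. f x = 0)"
    using integral_nonneg_eq_0_iff_AE[OF if' nn] .
  also have "\<dots> \<longleftrightarrow> (AE x in M. a x * b x \<ge> 0)" using pt by simp
  finally show ?thesis unfolding a_def b_def .
qed

end
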